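(* Let $f:\mathbb{R}^d\to\mathbb{R}$ satisfy the Standing Assumptions with constants $0<\mu\le L$ and $M>0$. Let $x_t\in\mathbb{R}^d$ with $\nabla f(x_t)\ne0$, let $G_t$ be symmetric positive definite with $$\nabla^2f(x_t)\preceq G_t\preceq\eta\,\nabla^2f(x_t)$$ for some constant $\eta\ge1$, and let $x_{t+1}=x_t-G_t^{-1}\nabla f(x_t)$. Suppose $M\lambda_t\le2$, where $\lambda_t:=\lambda_f(x_t)$. Let $r_t=\|x_{t+1}-x_t\|_{x_t}$ and $J_t=\int_0^1\nabla^2f(x_t+\tau(x_{t+1}-x_t))\,d\tau$. Then $$r_t\le\lambda_t\qquad\text{and}\qquad \theta(J_t,G_t,x_{t+1}-x_t)\le\frac{\eta-1+\frac{M\lambda_t}{2}}{\eta}.$$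
   Context: Standing Assumptions: $f$ is twice differentiable, $\mu$-strongly convex and has $L$-Lipschitz gradient, and is strongly self-concordant with constant $M>0$: for all $x,y,z,w\in\mathbb{R}^d$, $\nabla^2f(y)-\nabla^2f(x)\preceq M\|y-x\|_z\nabla^2f(w)$, where $\|h\|_z:=\sqrt{h^\top\nabla^2f(z)h}$. Newton decrement: $\lambda_f(x):=\sqrt{\nabla f(x)^\top\nabla^2f(x)^{-1}\nabla f(x)}$. $\theta(A,G,u):=\left(\frac{u^\top (G-A)A^{-1}(G-A)u}{u^\top GA^{-1}Gu}\right)^{1/2}$. *)

theory Defs
  imports "HOL-Analysis.Analysis"
begin

definition loewner_le :: "real^'n^'n \<Rightarrow> real^'n^'n \<Rightarrow> bool" where
  "loewner_le A B \<longleftrightarrow> (\<forall>h. h \<bullet> (A *v h) \<le> h \<bullet> (B *v h))"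

definition sym_pos_def :: "real^'n^'n \<Rightarrow> bool" where
  "sym_pos_def A \<longleftrightarrow> transpose A = A \<and> (\<forall>h. h \<noteq> 0 \<longrightarrow> 0 < h \<bullet> (A *v h))"

definition newton_decrement :: "(real^'n \<Rightarrow> real^'n) \<Rightarrow> (real^'n \<Rightarrow> real^'n^'n) \<Rightarrow> real^'n \<Rightarrow> real" where
  "newton_decrement g H x = sqrt (g x \<bullet> (matrix_inv (H x) *v g x))"

definition theta :: "real^'n^'n \<Rightarrow> real^'n^'n \<Rightarrow> real^'n \<Rightarrow> real" where
  "theta A G u = sqrt ((u \<bullet> ((G - A) ** matrix_inv A ** (G - A) *v u))
                      / (u \<bullet> (G ** matrix_inv A ** G *v u)))"

definition standing_assumptions ::
  "(real^'n \<Rightarrow> real) \<Rightarrow> (real^'n \<Rightarrow> real^'n) \<Rightarrow> (real^'n \<Rightarrow> real^'n^'n) \<Rightarrow> real \<Rightarrow> real \<Rightarrow> real \<Rightarrow> bool" where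
  "standing_assumptions f g H \<mu> L M \<longleftrightarrow>
     (\<forall>x. (f has_derivative (\<lambda>h. g x \<bullet> h)) (at x)) \<and>
     (\<forall>x. (g has_derivative (\<lambda>h. H x *v h)) (at x)) \<and>
     (\<forall>x y. f y \<ge> f x + g x \<bullet> (y - x) + \<mu> / 2 * (norm (y - x))\<^sup>2) \<and>
     (\<forall>x y. norm (g x - g y) \<le> L * norm (x - y)) \<and>
     (\<forall>x y z w. loewner_le (H y - H x) ((M * sqrt ((y - x) \<bullet> (H z *v (y - x)))) *\<^sub>R H w))"

end

theory Submission
  imports Defs
begin

lemma scaleR_mat_vec: "((k::real) *\<^sub>R A) *v x = k *\<^sub>R (A *v (x::real^'n))"
  by (simp add: matrix_vector_mult_def vec_eq_iff sum_distrib_left algebra_simps)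

lemma sym_inner:
  fixes A :: "real^'n^'n"
  assumes "transpose A = A"
  shows "x \<bullet> (A *v y) = y \<bullet> (A *v x)"
proof -
  have "x \<bullet> (A *v y) = (x v* A) \<bullet> y" by (simp add: dot_lmul_matrix)
  also have "x v* A = transpose A *v x" by simp
  also have "\<dots> = A *v x" using assms by simp
  finally show ?thesis by (simp add: inner_commute)
qed

lemma pd_invertible:
  fixes A :: "real^'n^'n"
  assumes "\<And>h. h \<noteq> 0 \<Longrightarrow> 0 < h \<bullet> (A *v h)"
  shows "invertible A"
proof -
  have "\<forall>x. A *v x = 0 \<longrightarrow> x = 0"
    using assms by (metis inner_zero_right less_irrefl)
  then show ?thesis
    using matrix_left_invertible_ker invertible_left_inverse by blast
qed

lemma inv_props:
  fixes A :: "real^'n^'n"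
  assumes "invertible A"
  shows "A *v (matrix_inv A *v y) = y" "matrix_inv A *v (A *v y) = y"
proof -
  have "A ** matrix_inv A = mat 1 \<and> matrix_inv A ** A = mat 1"
    using assms unfolding invertible_def matrix_inv_def by (rule someI_ex)
  then show "A *v (matrix_inv A *v y) = y" "matrix_inv A *v (A *v y) = y"
    by (simp_all add: matrix_vector_mul_assoc)
qed

lemma cs_psd:
  fixes A :: "real^'n^'n"
  assumes sym: "transpose A = A" and psd: "\<And>h. 0 \<le> h \<bullet> (A *v h)"
  shows "(a \<bullet> (A *v b))^2 \<le> (a \<bullet> (A *v a)) * (b \<bullet> (A *v b))"
proof -
  define p where "p = a \<bullet> (A *v a)"
  define q where "q = a \<bullet> (A *v b)"
  define s where "s = b \<bullet> (A *v b)"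
  have key: "0 \<le> p + 2*t*q + t^2 * s" for t
  proof -
    have "0 \<le> (a + t *\<^sub>R b) \<bullet> (A *v (a + t *\<^sub>R b))" by (rule psd)
    also have "\<dots> = p + t * (b \<bullet> (A *v a)) + t * q + t^2 * s"
      by (simp add: p_def q_def s_def algebra_simps inner_add_left inner_add_right power2_eq_square)
    also have "b \<bullet> (A *v a) = q" using sym_inner[OF sym] q_def by metis
    finally show ?thesis by (simp add: algebra_simps)
  qed
  have "p \<ge> 0" "s \<ge> 0" using psd p_def s_def by auto
  show ?thesis
  proof (cases "s = 0")
    case True
    have "q = 0"
    proof (rule ccontr)
      assume "q \<noteq> 0"
      have "0 \<le> p + 2*(-(p+1)/(2*q))*q" using key[of "-(p+1)/(2*q)"] True by simp
      also have "\<dots> = -1" using \<open>q \<noteq> 0\<close> by (simp add: field_simps)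
      finally show False by simp
    qed
    then show ?thesis using True p_def q_def s_def by simp
  next
    case False
    then have "s > 0" using \<open>s \<ge> 0\<close> by simp
    have "0 \<le> p + 2*(-q/s)*q + (-q/s)^2 * s" by (rule key)
    also have "\<dots> = p - q^2/s" using \<open>s > 0\<close> by (simp add: field_simps power2_eq_square)
    finally have "q^2 \<le> p * s" using \<open>s > 0\<close> by (simp add: field_simps)
    then show ?thesis using p_def q_def s_def by simp
  qed
qed

lemma schwarz_aux:
  fixes f :: "real^'n \<Rightarrow> real" and g :: "real^'n \<Rightarrow> real^'n" and H :: "real^'n \<Rightarrow> real^'n^'n"
  assumes fd: "\<And>y. (f has_derivative (\<lambda>h. g y \<bullet> h)) (at y)"
    and gd: "\<And>y. norm (y - x) < \<rho> \<Longrightarrow> norm (g y - g x - H x *v (y - x)) \<le> \<delta> * norm (y - x)"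
    and ep: "\<epsilon> > 0" and er: "\<epsilon> * (norm h + norm k) < \<rho>" and dp: "\<delta> \<ge> 0"
  shows "\<bar>f (x + \<epsilon> *\<^sub>R h + \<epsilon> *\<^sub>R k) - f (x + \<epsilon> *\<^sub>R h) - f (x + \<epsilon> *\<^sub>R k) + f x
           - \<epsilon>^2 * ((H x *v k) \<bullet> h)\<bar> \<le> \<delta> * \<epsilon>^2 * ((2 * norm h + norm k) * norm h)"
proof -
  define c where "c = (H x *v k) \<bullet> h"
  define \<phi> where "\<phi> t = f (x + t *\<^sub>R h + \<epsilon> *\<^sub>R k) - f (x + t *\<^sub>R h) - t * (\<epsilon> * c)" for t
  define \<phi>' where "\<phi>' t = (\<lambda>s. s * (g (x + t *\<^sub>R h + \<epsilon> *\<^sub>R k) \<bullet> h - g (x + t *\<^sub>R h) \<bullet> h - \<epsilon> * c))" for t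
  have der: "(\<phi> has_derivative \<phi>' t) (at t)" for t
  proof -
    have d1: "((\<lambda>t. f (x + t *\<^sub>R h + \<epsilon> *\<^sub>R k)) has_derivative (\<lambda>s. g (x + t *\<^sub>R h + \<epsilon> *\<^sub>R k) \<bullet> (s *\<^sub>R h))) (at t)"
      by (rule has_derivative_compose[OF _ fd]) (auto intro!: derivative_eq_intros)
    have d2: "((\<lambda>t. f (x + t *\<^sub>R h)) has_derivative (\<lambda>s. g (x + t *\<^sub>R h) \<bullet> (s *\<^sub>R h))) (at t)"
      by (rule has_derivative_compose[OF _ fd]) (auto intro!: derivative_eq_intros)
    have d3: "((\<lambda>t. t * (\<epsilon> * c)) has_derivative (\<lambda>s. s * (\<epsilon> * c))) (at t)"
      by (auto intro!: derivative_eq_intros)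
    have "((\<lambda>t. f (x + t *\<^sub>R h + \<epsilon> *\<^sub>R k) - f (x + t *\<^sub>R h) - t * (\<epsilon> * c)) has_derivative
       (\<lambda>s. g (x + t *\<^sub>R h + \<epsilon> *\<^sub>R k) \<bullet> (s *\<^sub>R h) - g (x + t *\<^sub>R h) \<bullet> (s *\<^sub>R h) - s * (\<epsilon> * c))) (at t)"
      by (intro has_derivative_diff d1 d2 d3)
    moreover have "(\<lambda>s. g (x + t *\<^sub>R h + \<epsilon> *\<^sub>R k) \<bullet> (s *\<^sub>R h) - g (x + t *\<^sub>R h) \<bullet> (s *\<^sub>R h) - s * (\<epsilon> * c)) = \<phi>' t"
      by (auto simp: \<phi>'_def algebra_simps fun_eq_iff)
    ultimately show ?thesis unfolding \<phi>_def by simp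
  qed
  have cont: "continuous_on {0..\<epsilon>} \<phi>"
    using der by (meson has_derivative_at_withinI has_derivative_continuous_on)
  obtain \<xi> where xi: "0 < \<xi>" "\<xi> < \<epsilon>" and eq: "\<phi> \<epsilon> - \<phi> 0 = \<phi>' \<xi> (\<epsilon> - 0)"
    using mvt[OF ep cont der] by metis
  define p1 where "p1 = x + \<xi> *\<^sub>R h + \<epsilon> *\<^sub>R k"
  define p2 where "p2 = x + \<xi> *\<^sub>R h"
  have n1: "norm (p1 - x) \<le> \<epsilon> * (norm h + norm k)"
  proof -
    have "norm (p1 - x) \<le> norm (\<xi> *\<^sub>R h) + norm (\<epsilon> *\<^sub>R k)" unfolding p1_def
      by (metis add_diff_cancel_left' add.assoc norm_triangle_ineq)
    also have "\<dots> \<le> \<epsilon> * norm h + \<epsilon> * norm k" using xi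
      by (auto intro!: add_mono mult_right_mono)
    finally show ?thesis by (simp add: algebra_simps)
  qed
  have n2: "norm (p2 - x) \<le> \<epsilon> * norm h" unfolding p2_def using xi
    by (auto intro!: mult_right_mono)
  have "\<epsilon> * norm h \<le> \<epsilon> * (norm h + norm k)" using ep by (simp add: mult_left_mono)
  then have r1: "norm (g p1 - g x - H x *v (p1 - x)) \<le> \<delta> * (\<epsilon> * (norm h + norm k))"
    and r2: "norm (g p2 - g x - H x *v (p2 - x)) \<le> \<delta> * (\<epsilon> * norm h)"
    using gd[of p1] gd[of p2] n1 n2 er dp
    by (auto intro: order_trans mult_left_mono)
  have split: "g p1 - g p2 - \<epsilon> *\<^sub>R (H x *v k) = (g p1 - g x - H x *v (p1 - x)) - (g p2 - g x - H x *v (p2 - x))"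
    by (simp add: p1_def p2_def algebra_simps)
  have "norm (g p1 - g p2 - \<epsilon> *\<^sub>R (H x *v k)) \<le> \<delta> * (\<epsilon> * (norm h + norm k)) + \<delta> * (\<epsilon> * norm h)"
    unfolding split using r1 r2 norm_triangle_ineq4 by (smt (verit))
  then have nb: "norm (g p1 - g p2 - \<epsilon> *\<^sub>R (H x *v k)) \<le> \<delta> * \<epsilon> * (2 * norm h + norm k)"
    by (simp add: algebra_simps)
  have "\<phi>' \<xi> (\<epsilon> - 0) = \<epsilon> * ((g p1 - g p2 - \<epsilon> *\<^sub>R (H x *v k)) \<bullet> h)"
    by (simp add: \<phi>'_def p1_def p2_def c_def inner_diff_left)
  then have "\<bar>\<phi> \<epsilon> - \<phi> 0\<bar> \<le> \<epsilon> * (norm (g p1 - g p2 - \<epsilon> *\<^sub>R (H x *v k)) * norm h)"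
    using eq ep by (simp add: abs_mult Cauchy_Schwarz_ineq2)
  also have "\<dots> \<le> \<epsilon> * ((\<delta> * \<epsilon> * (2 * norm h + norm k)) * norm h)"
    using nb ep by (intro mult_left_mono mult_right_mono) auto
  finally have "\<bar>\<phi> \<epsilon> - \<phi> 0\<bar> \<le> \<delta> * \<epsilon>^2 * ((2 * norm h + norm k) * norm h)"
    by (simp add: power2_eq_square algebra_simps)
  moreover have "\<phi> \<epsilon> - \<phi> 0 = f (x + \<epsilon> *\<^sub>R h + \<epsilon> *\<^sub>R k) - f (x + \<epsilon> *\<^sub>R h) - f (x + \<epsilon> *\<^sub>R k) + f x
           - \<epsilon>^2 * ((H x *v k) \<bullet> h)"
    by (simp add: \<phi>_def c_def power2_eq_square)
  ultimately show ?thesis by simp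
qed

lemma hess_sym_form:
  fixes f :: "real^'n \<Rightarrow> real" and g :: "real^'n \<Rightarrow> real^'n" and H :: "real^'n \<Rightarrow> real^'n^'n"
  assumes fd: "\<And>y. (f has_derivative (\<lambda>h. g y \<bullet> h)) (at y)"
    and gd: "\<And>y. (g has_derivative (\<lambda>h. H y *v h)) (at y)"
  shows "(H x *v k) \<bullet> h = (H x *v h) \<bullet> k"
proof (rule ccontr)
  assume ne: "(H x *v k) \<bullet> h \<noteq> (H x *v h) \<bullet> k"
  define d0 where "d0 = \<bar>(H x *v k) \<bullet> h - (H x *v h) \<bullet> k\<bar>"
  have d0p: "d0 > 0" using ne d0_def by simp
  define K where "K = (2 * norm h + norm k) * norm h + (2 * norm k + norm h) * norm k"
  have K0: "K \<ge> 0" unfolding K_def by simp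
  define \<delta> where "\<delta> = d0 / (2 * (K + 1))"
  have dp: "\<delta> > 0" using d0p K0 by (simp add: \<delta>_def)
  obtain \<rho> where rp: "\<rho> > 0" and rr: "\<And>y. norm (y - x) < \<rho> \<Longrightarrow> norm (g y - g x - H x *v (y - x)) \<le> \<delta> * norm (y - x)"
    using gd[of x] dp unfolding has_derivative_within_alt by blast
  define \<epsilon> where "\<epsilon> = \<rho> / (2 * (norm h + norm k + 1))"
  have ep: "\<epsilon> > 0" using rp by (simp add: \<epsilon>_def add_nonneg_pos)
  have "\<epsilon> * (norm h + norm k) < \<epsilon> * (2 * (norm h + norm k + 1))"
    using ep by (intro mult_strict_left_mono) (auto, smt (verit) norm_ge_zero)
  also have "\<dots> = \<rho>" unfolding \<epsilon>_def by (simp, smt (verit) norm_ge_zero)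
  finally have er: "\<epsilon> * (norm h + norm k) < \<rho>" .
  then have er2: "\<epsilon> * (norm k + norm h) < \<rho>" by (simp add: add.commute)
  note a1 = schwarz_aux[where f=f and g=g and H=H and x=x and \<rho>=\<rho> and \<delta>=\<delta> and \<epsilon>=\<epsilon> and h=h and k=k, OF fd rr ep er]
   and a2 = schwarz_aux[where f=f and g=g and H=H and x=x and \<rho>=\<rho> and \<delta>=\<delta> and \<epsilon>=\<epsilon> and h=k and k=h, OF fd rr ep er2]
  have sw: "x + \<epsilon> *\<^sub>R k + \<epsilon> *\<^sub>R h = x + \<epsilon> *\<^sub>R h + \<epsilon> *\<^sub>R k" by (simp add: algebra_simps)
  have "\<epsilon>^2 * d0 \<le> \<delta> * \<epsilon>^2 * ((2 * norm h + norm k) * norm h) + \<delta> * \<epsilon>^2 * ((2 * norm k + norm h) * norm k)"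
    using a1 a2 dp unfolding sw d0_def by (simp add: abs_mult) (smt (verit) right_diff_distrib)
  also have "\<dots> = \<epsilon>^2 * (\<delta> * K)" by (simp add: K_def algebra_simps)
  finally have "d0 \<le> \<delta> * K" using ep by simp
  also have "\<delta> * K < d0"
  proof -
    have "\<delta> * K = d0 * K / (2 * (K + 1))" by (simp add: \<delta>_def)
    also have "\<dots> < d0" using d0p K0 by (simp add: field_simps add_nonneg_pos)
    finally show ?thesis .
  qed
  finally show False by simp
qed

lemma hess_sym:
  fixes f :: "real^'n \<Rightarrow> real" and g :: "real^'n \<Rightarrow> real^'n" and H :: "real^'n \<Rightarrow> real^'n^'n"
  assumes fd: "\<And>y. (f has_derivative (\<lambda>h. g y \<bullet> h)) (at y)"
    and gd: "\<And>y. (g has_derivative (\<lambda>h. H y *v h)) (at y)"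
  shows "transpose (H x) = H x"
proof -
  have e: "(A *v axis j 1) \<bullet> axis i 1 = A $ i $ j" for A :: "real^'n^'n" and i j
    by (simp add: inner_axis matrix_vector_mul_component)
  show ?thesis
    unfolding vec_eq_iff transpose_def
    using hess_sym_form[OF fd gd] e by (metis vec_lambda_beta)
qed

lemma lin_int: "((\<lambda>\<tau>::real. a + b * \<tau>) has_integral (a + b / 2)) {0..1}"
proof -
  have "((\<lambda>\<tau>::real. a) has_integral a) {0..1}"
    using has_integral_const_real[of a 0 1] by simp
  moreover have "((\<lambda>\<tau>::real. b * \<tau>) has_integral b * (1/2)) {0..1}"
    using has_integral_mult_right[OF ident_has_integral[of 0 1]] by (simp add: power2_eq_square)
  ultimately have "((\<lambda>\<tau>::real. a + b * \<tau>) has_integral (a + b * (1/2))) {0..1}"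
    by (rule has_integral_add)
  then show ?thesis by simp
qed

lemma sc_q:
  fixes H :: "real^'n \<Rightarrow> real^'n^'n"
  assumes "loewner_le (H y - H x) ((M * sqrt ((y - x) \<bullet> (H z *v (y - x)))) *\<^sub>R H w)"
  shows "h \<bullet> (H y *v h) - h \<bullet> (H x *v h) \<le> M * sqrt ((y - x) \<bullet> (H z *v (y - x))) * (h \<bullet> (H w *v h))"
  using assms unfolding loewner_le_def
  by (auto simp: matrix_vector_mult_diff_rdistrib scaleR_mat_vec inner_diff_right)

lemma sqrt_scaled:
  fixes A :: "real^'n^'n"
  shows "sqrt ((t *\<^sub>R u) \<bullet> (A *v (t *\<^sub>R u))) = \<bar>t\<bar> * sqrt (u \<bullet> (A *v u))"
proof -
  have "(t *\<^sub>R u) \<bullet> (A *v (t *\<^sub>R u)) = t^2 * (u \<bullet> (A *v u))"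
    by (simp add: matrix_vector_mult_scaleR power2_eq_square)
  then show ?thesis by (simp add: real_sqrt_mult)
qed

lemma bl_quad: "bounded_linear (\<lambda>B::real^'n^'n. h \<bullet> (B *v h))"
  unfolding linear_linear
  by (rule linearI) (simp_all add: matrix_vector_mult_add_rdistrib scaleR_mat_vec inner_add_right)

lemma bl_transpose: "bounded_linear (transpose :: real^'n^'m \<Rightarrow> real^'m^'n)"
  unfolding linear_linear
  by (rule linearI) (simp_all add: transpose_def vec_eq_iff)

lemma lipschitz_cont:
  fixes F :: "real \<Rightarrow> real"
  assumes "\<And>t. \<bar>F t - F t0\<bar> \<le> C * \<bar>t - t0\<bar>"
  shows "isCont F t0"
proof -
  have "((\<lambda>t. F t - F t0) \<longlongrightarrow> 0) (at t0)"
  proof (rule Lim_null_comparison)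
    show "\<forall>\<^sub>F t in at t0. norm (F t - F t0) \<le> C * \<bar>t - t0\<bar>" using assms by simp
    have "((\<lambda>t. C * \<bar>t - t0\<bar>) \<longlongrightarrow> C * \<bar>t0 - t0\<bar>) (at t0)"
      by (intro tendsto_intros)
    then show "((\<lambda>t. C * \<bar>t - t0\<bar>) \<longlongrightarrow> 0) (at t0)" by simp
  qed
  then show ?thesis unfolding isCont_def using LIM_zero_cancel by blast
qed

lemma entry_polar:
  fixes B :: "real^'n^'n"
  assumes "transpose B = B"
  shows "B $ i $ j = ((axis i 1 + axis j 1) \<bullet> (B *v (axis i 1 + axis j 1))
                     - (axis i 1 - axis j 1) \<bullet> (B *v (axis i 1 - axis j 1))) / 4"
proof -
  have s: "axis j 1 \<bullet> (B *v axis i 1) = axis i 1 \<bullet> (B *v axis j 1)"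
    using sym_inner[OF assms] by metis
  have "axis i 1 \<bullet> (B *v axis j 1) = B $ i $ j"
    by (simp add: inner_commute[of "axis i 1"] inner_axis matrix_vector_mul_component)
  moreover have "(axis i 1 + axis j 1) \<bullet> (B *v (axis i 1 + axis j 1))
                     - (axis i 1 - axis j 1) \<bullet> (B *v (axis i 1 - axis j 1))
     = 2 * (axis i 1 \<bullet> (B *v axis j 1)) + 2 * (axis j 1 \<bullet> (B *v axis i 1))"
    unfolding matrix_vector_right_distrib matrix_vector_mult_diff_distrib inner_add_left inner_add_right inner_diff_left inner_diff_right
    by simp
  ultimately show ?thesis using s by simp
qed

lemma J_facts:
  fixes H :: "real^'n \<Rightarrow> real^'n^'n" and x u :: "real^'n"
  assumes sym: "\<And>y. transpose (H y) = H y"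
    and sc: "\<And>x y z w. loewner_le (H y - H x) ((M * sqrt ((y - x) \<bullet> (H z *v (y - x)))) *\<^sub>R H w)"
    and Apd: "\<And>h. h \<noteq> 0 \<Longrightarrow> 0 < h \<bullet> (H x *v h)"
    and Mp: "M > 0"
  defines "J \<equiv> integral {0..1} (\<lambda>\<tau>. H (x + \<tau> *\<^sub>R u))" and "r \<equiv> sqrt (u \<bullet> (H x *v u))"
  shows "transpose J = J"
    and "\<And>h. h \<bullet> (J *v h) \<le> (1 + M*r/2) * (h \<bullet> (H x *v h))"
    and "\<And>h. (1 - M*r/2) * (h \<bullet> (H x *v h)) \<le> h \<bullet> (J *v h)"
    and "\<And>h. h \<noteq> 0 \<Longrightarrow> 0 < h \<bullet> (J *v h)"
proof -
  define Y where "Y \<tau> = x + \<tau> *\<^sub>R u" for \<tau> :: real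
  define q where "q y h = h \<bullet> (H y *v h)" for y h
  have Apsd: "0 \<le> q x h" for h
    using Apd[of h] unfolding q_def by (cases "h = 0") auto
  have r0: "r \<ge> 0" using Apsd[of u] unfolding r_def q_def by simp
  have Y0: "Y 0 = x" by (simp add: Y_def)
  have dist: "sqrt ((Y t - Y s) \<bullet> (H x *v (Y t - Y s))) = \<bar>t - s\<bar> * r" for t s
  proof -
    have "Y t - Y s = (t - s) *\<^sub>R u" by (simp add: Y_def algebra_simps)
    then show ?thesis using sqrt_scaled r_def by metis
  qed
  have qd: "q (Y t) h - q (Y s) h \<le> M * (\<bar>t - s\<bar> * r) * q w h" for t s h w
    using sc_q[OF sc[where x="Y s" and y="Y t" and z=x and w=w]] dist[of t s] unfolding q_def by simp
  have qcont: "continuous_on UNIV (\<lambda>t. q (Y t) h)" for h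
  proof -
    have "isCont (\<lambda>t. q (Y t) h) s" for s
    proof (rule lipschitz_cont)
      fix t
      have "q (Y t) h - q (Y s) h \<le> M * (\<bar>t - s\<bar> * r) * q (Y s) h" by (rule qd)
      moreover have "q (Y s) h - q (Y t) h \<le> M * (\<bar>s - t\<bar> * r) * q (Y s) h" by (rule qd)
      moreover have "M * (\<bar>t - s\<bar> * r) * q (Y s) h \<le> M * (\<bar>t - s\<bar> * r) * \<bar>q (Y s) h\<bar>"
        using Mp r0 by (intro mult_left_mono) auto
      ultimately have "\<bar>q (Y t) h - q (Y s) h\<bar> \<le> M * (\<bar>t - s\<bar> * r) * \<bar>q (Y s) h\<bar>"
        by (simp add: abs_minus_commute abs_le_iff)
      then show "\<bar>q (Y t) h - q (Y s) h\<bar> \<le> (M * r * \<bar>q (Y s) h\<bar>) * \<bar>t - s\<bar>"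
        by (simp add: algebra_simps)
    qed
    then show ?thesis by (simp add: continuous_at_imp_continuous_on)
  qed
  have Hcont: "continuous_on {0..1} (\<lambda>t. H (Y t))"
  proof -
    have ent: "continuous_on {0..1} (\<lambda>t. H (Y t) $ i $ j)" for i j
    proof -
      have "(\<lambda>t. H (Y t) $ i $ j) = (\<lambda>t. (q (Y t) (axis i 1 + axis j 1) - q (Y t) (axis i 1 - axis j 1)) / 4)"
      proof (rule ext)
        fix t show "H (Y t) $ i $ j = (q (Y t) (axis i 1 + axis j 1) - q (Y t) (axis i 1 - axis j 1)) / 4"
          unfolding q_def by (rule entry_polar[OF sym])
      qed
      moreover have "continuous_on {0..1} (\<lambda>t. (q (Y t) (axis i 1 + axis j 1) - q (Y t) (axis i 1 - axis j 1)) / 4)"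
        by (intro continuous_intros continuous_on_subset[OF qcont]) auto
      ultimately show ?thesis by metis
    qed
    have "(\<lambda>t. H (Y t)) = (\<lambda>t. \<chi> i. \<chi> j. H (Y t) $ i $ j)" by (simp add: vec_lambda_eta)
    moreover have "continuous_on {0..1} (\<lambda>t. \<chi> i. \<chi> j. H (Y t) $ i $ j)"
      by (intro continuous_on_vec_lambda ent)
    ultimately show ?thesis by simp
  qed
  have hasI: "((\<lambda>t. H (Y t)) has_integral J) {0..1}"
    unfolding J_def Y_def[symmetric]
    using integrable_continuous_real[OF Hcont] by (simp add: integrable_integral)
  have qint: "((\<lambda>t. q (Y t) h) has_integral (h \<bullet> (J *v h))) {0..1}" for h
    using has_integral_linear[OF hasI bl_quad[of h]] unfolding q_def o_def .
  show "transpose J = J"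
  proof -
    have "((transpose \<circ> (\<lambda>t. H (Y t))) has_integral transpose J) {0..1}"
      by (rule has_integral_linear[OF hasI bl_transpose])
    then have "((\<lambda>t. H (Y t)) has_integral transpose J) {0..1}" using sym by (simp add: o_def)
    then show ?thesis using hasI has_integral_unique by blast
  qed
  show "h \<bullet> (J *v h) \<le> (1 + M*r/2) * (h \<bullet> (H x *v h))" for h
  proof -
    have "h \<bullet> (J *v h) \<le> q x h + (M * r * q x h) / 2"
    proof (rule has_integral_le[OF qint lin_int])
      fix t :: real assume "t \<in> {0..1}"
      then have "q (Y t) h - q (Y 0) h \<le> M * (\<bar>t - 0\<bar> * r) * q x h" using qd by blast
      then show "q (Y t) h \<le> q x h + M * r * q x h * t" using \<open>t \<in> {0..1}\<close> Y0 by (simp add: algebra_simps)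
    qed
    then show ?thesis unfolding q_def by (simp add: algebra_simps)
  qed
  show "(1 - M*r/2) * (h \<bullet> (H x *v h)) \<le> h \<bullet> (J *v h)" for h
  proof -
    have "q x h + (- (M * r * q x h)) / 2 \<le> h \<bullet> (J *v h)"
    proof (rule has_integral_le[OF lin_int qint])
      fix t :: real assume "t \<in> {0..1}"
      then have "q (Y 0) h - q (Y t) h \<le> M * (\<bar>0 - t\<bar> * r) * q x h" using qd by blast
      then show "q x h + - (M * r * q x h) * t \<le> q (Y t) h" using \<open>t \<in> {0..1}\<close> Y0 by (simp add: algebra_simps)
    qed
    then show ?thesis unfolding q_def by (simp add: algebra_simps)
  qed
  show "0 < h \<bullet> (J *v h)" if hn: "h \<noteq> 0" for h
  proof -
    have qp: "q x h > 0" using Apd[OF hn] q_def by simp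
    have den: "1 + M * r > 0" using Mp r0 by (simp add: add_pos_nonneg)
    have "q x h / (1 + M * r) \<le> h \<bullet> (J *v h)"
    proof (rule has_integral_le[OF _ qint])
      show "((\<lambda>t. q x h / (1 + M * r)) has_integral q x h / (1 + M * r)) {0..1::real}"
        using has_integral_const_real[of "q x h / (1 + M * r)" 0 1] by simp
      fix t :: real assume t: "t \<in> {0..1}"
      then have "q (Y 0) h - q (Y t) h \<le> M * (\<bar>0 - t\<bar> * r) * q (Y t) h" using qd by blast
      then have a: "q x h \<le> (1 + M * t * r) * q (Y t) h" using t Y0 by (simp add: algebra_simps)
      have b: "0 \<le> M * t * r" using Mp r0 t by simp
      have "q (Y t) h > 0"
      proof (rule ccontr)
        assume "\<not> q (Y t) h > 0"
        then have "(1 + M * t * r) * q (Y t) h \<le> 0" using b by (simp add: mult_nonneg_nonpos)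
        then show False using a qp by simp
      qed
      have "(1 + M * t * r) * q (Y t) h \<le> (1 + M * r) * q (Y t) h"
        using \<open>q (Y t) h > 0\<close> t Mp r0 by (intro mult_right_mono) (auto simp: mult_left_le_one_le)
      then have "q x h \<le> (1 + M * r) * q (Y t) h" using a by simp
      then show "q x h / (1 + M * r) \<le> q (Y t) h" using den by (simp add: field_simps)
    qed
    moreover have "q x h / (1 + M * r) > 0" using qp den by simp
    ultimately show ?thesis by simp
  qed
qed

lemma quad_exp:
  fixes B :: "real^'n^'n"
  assumes "transpose B = B"
  shows "(a *\<^sub>R u + b *\<^sub>R v) \<bullet> (B *v (a *\<^sub>R u + b *\<^sub>R v))
       = a^2 * (u \<bullet> (B *v u)) + 2 * a * b * (u \<bullet> (B *v v)) + b^2 * (v \<bullet> (B *v v))"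
proof -
  have s: "v \<bullet> (B *v u) = u \<bullet> (B *v v)" using sym_inner[OF assms] by metis
  show ?thesis
    by (simp add: matrix_vector_right_distrib matrix_vector_mult_scaleR inner_add_left inner_add_right s
        power2_eq_square algebra_simps)
qed

theorem lemma9:
  fixes f :: "real^'n \<Rightarrow> real" and g :: "real^'n \<Rightarrow> real^'n" and H :: "real^'n \<Rightarrow> real^'n^'n"
    and \<mu> L M \<eta> :: real and x x' :: "real^'n" and G :: "real^'n^'n"
  assumes "0 < \<mu>" "\<mu> \<le> L" "0 < M"
    and "standing_assumptions f g H \<mu> L M"
    and "g x \<noteq> 0"
    and "sym_pos_def G"
    and "\<eta> \<ge> 1"
    and "loewner_le (H x) G" "loewner_le G (\<eta> *\<^sub>R H x)"
    and "x' = x - matrix_inv G *v g x"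
    and "M * newton_decrement g H x \<le> 2"
  shows "sqrt ((x' - x) \<bullet> (H x *v (x' - x))) \<le> newton_decrement g H x
       \<and> theta (integral {0..1} (\<lambda>\<tau>. H (x + \<tau> *\<^sub>R (x' - x)))) G (x' - x)
           \<le> (\<eta> - 1 + M * newton_decrement g H x / 2) / \<eta>"
proof -
  note SA = assms(4)[unfolded standing_assumptions_def]
  have fd: "\<And>y. (f has_derivative (\<lambda>h. g y \<bullet> h)) (at y)" using SA by blast
  have gd: "\<And>y. (g has_derivative (\<lambda>h. H y *v h)) (at y)" using SA by blast
  have sc: "\<And>x y z w. loewner_le (H y - H x) ((M * sqrt ((y - x) \<bullet> (H z *v (y - x)))) *\<^sub>R H w)"
    using SA by blast
  have symH: "\<And>y. transpose (H y) = H y" using hess_sym[OF fd gd] by blast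
  define A where "A = H x"
  have symA: "transpose A = A" using symH A_def by simp
  have symG: "transpose G = G" and Gpd: "\<And>h. h \<noteq> 0 \<Longrightarrow> 0 < h \<bullet> (G *v h)"
    using assms(6) unfolding sym_pos_def_def by auto
  have lo1: "\<And>h. h \<bullet> (A *v h) \<le> h \<bullet> (G *v h)" using assms(8) unfolding loewner_le_def A_def by blast
  have lo2: "\<And>h. h \<bullet> (G *v h) \<le> \<eta> * (h \<bullet> (A *v h))"
    using assms(9) unfolding loewner_le_def A_def by (simp add: scaleR_mat_vec)
  have etap: "\<eta> > 0" using assms(7) by simp
  have Apd: "\<And>h. h \<noteq> 0 \<Longrightarrow> 0 < h \<bullet> (A *v h)"
  proof -
    fix h :: "real^'n" assume "h \<noteq> 0"
    then have "0 < \<eta> * (h \<bullet> (A *v h))" using Gpd lo2 by (meson less_le_trans)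
    then show "0 < h \<bullet> (A *v h)" using etap by (simp add: zero_less_mult_iff)
  qed
  have Apsd: "\<And>h. 0 \<le> h \<bullet> (A *v h)" using Apd by (metis inner_zero_left order_le_less)
  have Gpsd: "\<And>h. 0 \<le> h \<bullet> (G *v h)" using Gpd by (metis inner_zero_left order_le_less)
  have invA: "invertible A" by (rule pd_invertible[OF Apd])
  have invG: "invertible G" by (rule pd_invertible[OF Gpd])
  define p where "p = g x"
  define u where "u = x' - x"
  define w where "w = matrix_inv A *v p"
  define lam where "lam = newton_decrement g H x"
  define r where "r = sqrt (u \<bullet> (H x *v u))"
  have Aw: "A *v w = p" unfolding w_def using inv_props[OF invA] by simp
  have neg: "G *v (- z) = - (G *v z)" for z using matrix_vector_mult_scaleR[of G "-1" z] by simp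
  have Gu: "G *v u = - p" unfolding u_def assms(10) p_def using inv_props[OF invG] neg
    by (simp add: matrix_vector_mult_diff_distrib)
  have wn: "w \<noteq> 0" using Aw assms(5) p_def by auto
  have lam_def2: "lam = sqrt (w \<bullet> (A *v w))"
    unfolding lam_def newton_decrement_def using Aw w_def A_def p_def by (simp add: inner_commute)
  have lamp: "lam > 0" using Apd[OF wn] lam_def2 by simp
  have lam2: "lam^2 = w \<bullet> (A *v w)" using Apsd[of w] lam_def2 by simp
  have r0: "r \<ge> 0" using Apsd[of u] r_def A_def by simp
  have r2: "r^2 = u \<bullet> (A *v u)" using Apsd[of u] r_def A_def by simp
  have up: "u \<bullet> (A *v w) = u \<bullet> p" using Aw by simp
  have cs: "(u \<bullet> p)^2 \<le> r^2 * lam^2" using cs_psd[OF symA Apsd, of u w] up r2 lam2 by simp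
  have "r^2 \<le> u \<bullet> (G *v u)" using lo1 r2 by simp
  also have "\<dots> = - (u \<bullet> p)" using Gu by simp
  also have "\<dots> \<le> \<bar>u \<bullet> p\<bar>" by simp
  also have "\<dots> \<le> r * lam"
  proof -
    have "\<bar>u \<bullet> p\<bar> = sqrt ((u \<bullet> p)^2)" by simp
    also have "\<dots> \<le> sqrt ((r * lam)^2)" using cs by (intro real_sqrt_le_mono) (simp add: power_mult_distrib)
    also have "\<dots> = r * lam" using r0 lamp by simp
    finally show ?thesis .
  qed
  finally have "r^2 \<le> r * lam" .
  then have rl: "r \<le> lam" using r0 lamp
    by (cases "r = 0") (auto simp: power2_eq_square)
  define J where "J = integral {0..1} (\<lambda>\<tau>. H (x + \<tau> *\<^sub>R u))"
  have ApdH: "\<And>h. h \<noteq> 0 \<Longrightarrow> 0 < h \<bullet> (H x *v h)" using Apd A_def by simp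
  note JF0 = J_facts[where H=H and x=x and u=u and M=M, OF symH sc ApdH assms(3)]
  have JF: "transpose J = J" "\<And>h. h \<bullet> (J *v h) \<le> (1 + M*r/2) * (h \<bullet> (A *v h))"
    "\<And>h. (1 - M*r/2) * (h \<bullet> (A *v h)) \<le> h \<bullet> (J *v h)" "\<And>h. h \<noteq> 0 \<Longrightarrow> 0 < h \<bullet> (J *v h)"
    unfolding J_def r_def A_def using JF0 by blast+
  define c where "c = (\<eta> - 1 + M * lam / 2) / \<eta>"
  have Ml: "M * lam / 2 \<le> 1" using assms(11) lam_def by simp
  have cpos: "c > 0" using etap assms(3,7) lamp unfolding c_def by (simp add: add_nonneg_pos)
  have cle1: "c \<le> 1" using etap Ml unfolding c_def by (simp add: field_simps)
  have oneminus: "(1 - c) * \<eta> = 1 - M * lam / 2" using etap unfolding c_def by (simp add: field_simps)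
  have Mrc: "M * r / 2 \<le> c"
  proof -
    have "M * r / 2 \<le> M * lam / 2" using rl assms(3) by simp
    also have "M * lam / 2 \<le> c"
    proof -
      have "c - M * lam / 2 = (\<eta> - 1) * (1 - M * lam / 2) / \<eta>" using etap unfolding c_def
        by (simp add: field_simps)
      also have "\<dots> \<ge> 0" using assms(7) Ml etap by simp
      finally show ?thesis by simp
    qed
    finally show ?thesis .
  qed
  have Jup: "h \<bullet> (J *v h) \<le> (1 + c) * (h \<bullet> (G *v h))" for h
  proof -
    have "h \<bullet> (J *v h) \<le> (1 + M*r/2) * (h \<bullet> (A *v h))" by (rule JF(2))
    also have "\<dots> \<le> (1 + c) * (h \<bullet> (A *v h))" using Mrc Apsd by (intro mult_right_mono) auto
    also have "\<dots> \<le> (1 + c) * (h \<bullet> (G *v h))" using lo1 cpos by (intro mult_left_mono) auto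
    finally show ?thesis .
  qed
  have Jlo: "(1 - c) * (h \<bullet> (G *v h)) \<le> h \<bullet> (J *v h)" for h
  proof -
    have "(1 - c) * (h \<bullet> (G *v h)) \<le> (1 - c) * (\<eta> * (h \<bullet> (A *v h)))"
      using lo2 cle1 by (intro mult_left_mono) auto
    also have "\<dots> = (1 - M * lam / 2) * (h \<bullet> (A *v h))" using oneminus by (metis mult.assoc)
    also have "\<dots> \<le> (1 - M * r / 2) * (h \<bullet> (A *v h))"
      using Apsd rl assms(3) by (intro mult_right_mono) auto
    also have "\<dots> \<le> h \<bullet> (J *v h)" by (rule JF(3))
    finally show ?thesis .
  qed
  have symJ: "transpose J = J" by (rule JF(1))
  have invJ: "invertible J" by (rule pd_invertible[OF JF(4)])
  define Ji where "Ji = matrix_inv J"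
  define v where "v = Ji *v (G *v u)"
  have Jv: "J *v v = G *v u" unfolding v_def Ji_def using inv_props[OF invJ] by simp
  define a where "a = u \<bullet> (G *v u)"
  define b where "b = u \<bullet> (J *v u)"
  define d where "d = v \<bullet> (J *v v)"
  define gv where "gv = v \<bullet> (G *v v)"
  have uGv: "u \<bullet> (G *v v) = d" unfolding d_def using sym_inner[OF symG, of u v] Jv by simp
  have uJv: "u \<bullet> (J *v v) = a" unfolding a_def using Jv by simp
  define N where "N = u \<bullet> ((G - J) ** Ji ** (G - J) *v u)"
  define D where "D = u \<bullet> (G ** Ji ** G *v u)"
  have Nf: "N = d - 2 * a + b"
  proof -
    have "(G - J) *v u = J *v (v - u)" using Jv by (simp add: matrix_vector_mult_diff_rdistrib matrix_vector_mult_diff_distrib)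
    then have "Ji *v ((G - J) *v u) = v - u" unfolding Ji_def using inv_props[OF invJ] by simp
    then have "N = u \<bullet> ((G - J) *v (v - u))" unfolding N_def by (simp add: matrix_vector_mul_assoc[symmetric])
    also have "\<dots> = u \<bullet> (G *v v) - a - u \<bullet> (J *v v) + b"
      unfolding a_def b_def by (simp add: matrix_vector_mult_diff_rdistrib matrix_vector_mult_diff_distrib inner_diff_right)
    finally show ?thesis using uGv uJv by simp
  qed
  have Df: "D = d"
  proof -
    have "D = u \<bullet> (G *v v)" unfolding D_def v_def by (simp add: matrix_vector_mul_assoc[symmetric])
    then show ?thesis using uGv by simp
  qed
  have d0: "d \<ge> 0" unfolding d_def using JF(4)[of v] by (cases "v = 0") auto
  define e where "e = 1 *\<^sub>R u + (-(1 - c)) *\<^sub>R v"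
  define f' where "f' = (-1) *\<^sub>R u + (1 + c) *\<^sub>R v"
  have eG: "e \<bullet> (G *v e) = a + 2 * (-(1-c)) * d + (1-c)^2 * gv"
    unfolding e_def quad_exp[OF symG] a_def[symmetric] gv_def[symmetric] uGv by (simp add: power2_eq_square algebra_simps)
  have eJ: "e \<bullet> (J *v e) = b + 2 * (-(1-c)) * a + (1-c)^2 * d"
    unfolding e_def quad_exp[OF symJ] b_def[symmetric] d_def[symmetric] uJv by (simp add: power2_eq_square algebra_simps)
  have fG: "f' \<bullet> (G *v f') = a + 2 * (-(1+c)) * d + (1+c)^2 * gv"
    unfolding f'_def quad_exp[OF symG] a_def[symmetric] gv_def[symmetric] uGv by (simp add: power2_eq_square algebra_simps)
  have fJ: "f' \<bullet> (J *v f') = b + 2 * (-(1+c)) * a + (1+c)^2 * d"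
    unfolding f'_def quad_exp[OF symJ] b_def[symmetric] d_def[symmetric] uJv by (simp add: power2_eq_square algebra_simps)
  have P: "0 \<le> (1 + c) * (e \<bullet> (G *v e)) - e \<bullet> (J *v e)" using Jup[of e] by simp
  have Q: "0 \<le> f' \<bullet> (J *v f') - (1 - c) * (f' \<bullet> (G *v f'))" using Jlo[of f'] by simp
  have ident: "2 * c * (c^2 * d - (d - 2 * a + b))
      = (1 + c) * ((1 + c) * (e \<bullet> (G *v e)) - e \<bullet> (J *v e))
        + (1 - c) * (f' \<bullet> (J *v f') - (1 - c) * (f' \<bullet> (G *v f')))"
    unfolding eG eJ fG fJ by (simp add: power2_eq_square algebra_simps)
  have "0 \<le> 2 * c * (c^2 * d - (d - 2 * a + b))"
    unfolding ident using P Q cpos cle1 by (intro add_nonneg_nonneg mult_nonneg_nonneg) auto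
  then have ND: "N \<le> c^2 * D" using cpos Nf Df by (simp add: zero_le_mult_iff)
  have th: "theta J G u \<le> c"
  proof -
    have "theta J G u = sqrt (N / D)" unfolding theta_def N_def D_def Ji_def by simp
    also have "\<dots> \<le> c"
    proof (cases "D = 0")
      case True then show ?thesis using cpos by simp
    next
      case False
      then have "D > 0" using Df d0 by simp
      then have "N / D \<le> c^2" using ND by (simp add: field_simps)
      then have "sqrt (N / D) \<le> sqrt (c^2)" by (rule real_sqrt_le_mono)
      then show ?thesis using cpos by simp
    qed
    finally show ?thesis .
  qed
  show ?thesis
    using rl th unfolding r_def lam_def u_def J_def c_def by simp
qed

end
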